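(* For all integers $k\ge1$ and generic $a,b,c,d$, the polynomials $$Q_k^{(2)}(n;a;b,c,d)=\sum_{j=0}^k\frac{(-n)_j(n+a)_j(-k)_j(k-1-a+b+c+d)_j}{j!(b)_j(c)_j(d)_j}$$ satisfy $$abcd\,\frac{n+\frac a2}{\frac a2}\,Q_k^{(2)}(n;a;b,c,d)=(n+a)(n+b)(n+c)(n+d)\,Q_{k-1}^{(2)}(n;a+1;b+1,c+1,d+1)$$ $$\qquad-n(n+a-b)(n+a-c)(n+a-d)\,Q_{k-1}^{(2)}(n-1;a+1;b+1,c+1,d+1).$$
   Context: $(c)_n$ denotes the Pochhammer symbol, $(c)_0=1$. *)

theory Defs
  imports Complex_Main
begin

definition Q2 :: "nat \<Rightarrow> complex \<Rightarrow> complex \<Rightarrow> complex \<Rightarrow> complex \<Rightarrow> complex \<Rightarrow> complex" where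
  "Q2 k n a b c d = (\<Sum>j=0..k.
     pochhammer (-n) j * pochhammer (n + a) j * pochhammer (- of_nat k) j
       * pochhammer (of_nat k - 1 - a + b + c + d) j
     / (fact j * pochhammer b j * pochhammer c j * pochhammer d j))"

end

theory Submission imports Defs begin

lemma polyid:
  fixes n a b c d N A j A' N' :: complex
  assumes h1: "(n+a)*A' = A*(n+a+j)" and h2: "n*N' = -(N*(-n+j))"
  shows "(n+a)*(n+b)*(n+c)*(n+d)*(N*A') - n*(n+a-b)*(n+a-c)*(n+a-d)*(N'*A)
   = (2*n+a)*((b+j)*(c+j)*(d+j)*(N*A) - (b+c+d-a+j)*((N*(-n+j))*(A*(n+a+j))))"
proof -
  have "(n+a)*(n+b)*(n+c)*(n+d)*(N*A') = (n+b)*(n+c)*(n+d)*N*((n+a)*A')" by (simp add: algebra_simps)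
  also have "\<dots> = (n+b)*(n+c)*(n+d)*N*(A*(n+a+j))" using h1 by simp
  finally have 1: "(n+a)*(n+b)*(n+c)*(n+d)*(N*A') = (n+b)*(n+c)*(n+d)*N*(A*(n+a+j))" .
  have "n*(n+a-b)*(n+a-c)*(n+a-d)*(N'*A) = (n+a-b)*(n+a-c)*(n+a-d)*A*(n*N')" by (simp add: algebra_simps)
  also have "\<dots> = (n+a-b)*(n+a-c)*(n+a-d)*A*(-(N*(-n+j)))" using h2 by simp
  finally have 2: "n*(n+a-b)*(n+a-c)*(n+a-d)*(N'*A) = (n+a-b)*(n+a-c)*(n+a-d)*A*(-(N*(-n+j)))" .
  show ?thesis unfolding 1 2 by algebra
qed

lemma coef:
  fixes K a b c d e t X Y F B C D :: complex
  assumes "b \<noteq> 0" "c \<noteq> 0" "d \<noteq> 0" "B \<noteq> 0" "C \<noteq> 0" "D \<noteq> 0" "F \<noteq> 0" "t + 1 \<noteq> 0"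
    and nz: "(b + 1 + t \<noteq> 0 \<and> c + 1 + t \<noteq> 0 \<and> d + 1 + t \<noteq> 0) \<or> 1 - K + t = 0"
    and e: "e = K - 1 - a + b + c + d"
  shows "b*c*d*((- K * X) * (e * Y) / ((t+1) * F * (b * B) * (c * C) * (d * D)))
    = (X * (1 - K + t)) * (Y * (e + 1 + t)) / ((t+1) * F * (B * (b + 1 + t)) * (C * (c + 1 + t)) * (D * (d + 1 + t)))
       * ((b + (t+1)) * (c + (t+1)) * (d + (t+1)))
     - (b + c + d - a + t) * (X * Y / (F * B * C * D))"
proof -
  define Z where "Z = X * Y / (F * B * C * D)"
  have l: "b*c*d*((- K * X) * (e * Y) / ((t+1) * F * (b * B) * (c * C) * (d * D))) = Z * (-K*e/(t+1))"
  proof -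
    have "(t+1) * F * (b * B) * (c * C) * (d * D) = (b*c*d)*((t+1)*(F*B*C*D))" by (simp add: algebra_simps)
    moreover have "(- K * X) * (e * Y) = (b*c*d)*((- K * X) * (e * Y)) / (b*c*d)" using assms by simp
    ultimately show ?thesis unfolding Z_def using assms by (simp add: ac_simps)
  qed
  have r: "(X * (1 - K + t)) * (Y * (e + 1 + t)) / ((t+1) * F * (B * (b + 1 + t)) * (C * (c + 1 + t)) * (D * (d + 1 + t)))
       * ((b + (t+1)) * (c + (t+1)) * (d + (t+1))) = Z * ((1 - K + t) * (e + 1 + t) / (t+1))"
  proof (cases "1 - K + t = 0")
    case True then show ?thesis by simp
  next
    case False
    then have nz': "b + 1 + t \<noteq> 0" "c + 1 + t \<noteq> 0" "d + 1 + t \<noteq> 0" using nz by auto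
    have eq: "b + (t+1) = b + 1 + t" "c + (t+1) = c + 1 + t" "d + (t+1) = d + 1 + t" by simp_all
    define G where "G = (b + 1 + t) * (c + 1 + t) * (d + 1 + t)"
    have G: "G \<noteq> 0" unfolding G_def using nz' by simp
    have "(t+1) * F * (B * (b + 1 + t)) * (C * (c + 1 + t)) * (D * (d + 1 + t)) = G*((t+1)*(F*B*C*D))"
      unfolding G_def by (simp add: algebra_simps)
    then have "(X * (1 - K + t)) * (Y * (e + 1 + t)) / ((t+1) * F * (B * (b + 1 + t)) * (C * (c + 1 + t)) * (D * (d + 1 + t)))
       * G = (X * (1 - K + t)) * (Y * (e + 1 + t)) / (G*((t+1)*(F*B*C*D))) * G"
      by (simp only:)
    also have "\<dots> = (X * (1 - K + t)) * (Y * (e + 1 + t)) / ((t+1)*(F*B*C*D))"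
      using G by simp
    finally have "(X * (1 - K + t)) * (Y * (e + 1 + t)) / ((t+1) * F * (B * (b + 1 + t)) * (C * (c + 1 + t)) * (D * (d + 1 + t)))
       * G = (X * (1 - K + t)) * (Y * (e + 1 + t)) / ((t+1)*(F*B*C*D))" .
    then show ?thesis unfolding eq G_def[symmetric] Z_def by (simp add: ac_simps)
  qed
  have k: "-K*e/(t+1) = (1 - K + t) * (e + 1 + t) / (t+1) - (b + c + d - a + t)"
    using assms by (simp add: field_simps e)
  show ?thesis unfolding l r k Z_def[symmetric] by (simp add: algebra_simps)
qed


theorem mainTheorem16:
  fixes k :: nat and n a b c d :: complex
  assumes "k \<ge> 1"
    and "a \<noteq> 0"
    and "pochhammer b k \<noteq> 0" and "pochhammer c k \<noteq> 0" and "pochhammer d k \<noteq> 0"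
  shows "a * b * c * d * ((n + a / 2) / (a / 2)) * Q2 k n a b c d
       = (n + a) * (n + b) * (n + c) * (n + d) * Q2 (k - 1) n (a + 1) (b + 1) (c + 1) (d + 1)
         - n * (n + a - b) * (n + a - c) * (n + a - d) * Q2 (k - 1) (n - 1) (a + 1) (b + 1) (c + 1) (d + 1)"
proof -
  obtain m where km: "k = Suc m" using assms(1) by (cases k) auto
  define e where "e = of_nat k - 1 - a + b + c + d"
  define P where "P j = pochhammer (-n) j * pochhammer (n+a) j" for j
  define V where "V j = pochhammer (1 - of_nat k) j * pochhammer (e+1) j
      / (fact j * pochhammer (b+1) j * pochhammer (c+1) j * pochhammer (d+1) j)" for j
  define L where "L j = pochhammer (- of_nat k) j * pochhammer e j
      / (fact j * pochhammer b j * pochhammer c j * pochhammer d j)" for j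
  define g where "g j = (b + of_nat j) * (c + of_nat j) * (d + of_nat j)" for j
  define be where "be j = b + c + d - a + of_nat j" for j
  have nzb: "pochhammer b j \<noteq> 0" if "j \<le> k" for j using pochhammer_neq_0_mono assms(3) that by blast
  have nzc: "pochhammer c j \<noteq> 0" if "j \<le> k" for j using pochhammer_neq_0_mono assms(4) that by blast
  have nzd: "pochhammer d j \<noteq> 0" if "j \<le> k" for j using pochhammer_neq_0_mono assms(5) that by blast
  have hQ: "Q2 k n a b c d = (\<Sum>j\<le>Suc m. P j * L j)"
    unfolding Q2_def P_def L_def e_def km atLeast0AtMost by (simp add: ac_simps)
  have ks: "(of_nat (k - 1) :: complex) = of_nat k - 1" using assms(1) by (simp add: of_nat_diff)
  have hQ1: "Q2 (k-1) n (a+1) (b+1) (c+1) (d+1) = (\<Sum>j\<le>m. pochhammer (-n) j * pochhammer (n+a+1) j * V j)"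
  proof -
    have 1: "of_nat k - 1 - 1 - (a + 1) + (b + 1) + (c + 1) + (d + 1) = e + 1" unfolding e_def by simp
    have 2: "- (of_nat k - 1) = (1 - of_nat k :: complex)" by simp
    have 3: "n + (a + 1) = n + a + 1" by simp
    show ?thesis unfolding Q2_def ks 1 2 3 V_def atLeast0AtMost using km by (simp add: ac_simps)
  qed
  have hQ2: "Q2 (k-1) (n-1) (a+1) (b+1) (c+1) (d+1) = (\<Sum>j\<le>m. pochhammer (1-n) j * pochhammer (n+a) j * V j)"
  proof -
    have 1: "of_nat k - 1 - 1 - (a + 1) + (b + 1) + (c + 1) + (d + 1) = e + 1" unfolding e_def by simp
    have 2: "- (of_nat k - 1) = (1 - of_nat k :: complex)" by simp
    have 3: "n - 1 + (a + 1) = n + a" by simp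
    have 4: "- (n - 1) = 1 - n" by simp
    show ?thesis unfolding Q2_def ks 1 2 3 4 V_def atLeast0AtMost using km by (simp add: ac_simps)
  qed
  have hC: "(n + a) * (n + b) * (n + c) * (n + d) * (pochhammer (-n) j * pochhammer (n+a+1) j * V j)
      - n * (n + a - b) * (n + a - c) * (n + a - d) * (pochhammer (1-n) j * pochhammer (n+a) j * V j)
      = (2*n+a) * (V j * (g j * P j - be j * P (Suc j)))" for j
  proof -
    have h1: "(n+a) * pochhammer (n+a+1) j = pochhammer (n+a) j * (n+a+of_nat j)"
      using pochhammer_rec[of "n+a" j] pochhammer_Suc[of "n+a" j] by simp
    have h2: "n * pochhammer (1-n) j = - (pochhammer (-n) j * (-n+of_nat j))"
      using pochhammer_rec[of "-n" j] pochhammer_Suc[of "-n" j] by (simp add: add.commute)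
    have PS: "P (Suc j) = (pochhammer (-n) j * (-n+of_nat j)) * (pochhammer (n+a) j * (n+a+of_nat j))"
      unfolding P_def pochhammer_Suc by simp
    have "(n + a) * (n + b) * (n + c) * (n + d) * (pochhammer (-n) j * pochhammer (n+a+1) j)
      - n * (n + a - b) * (n + a - c) * (n + a - d) * (pochhammer (1-n) j * pochhammer (n+a) j)
      = (2*n+a) * (g j * P j - be j * P (Suc j))"
      unfolding PS unfolding g_def be_def P_def by (rule polyid[OF h1 h2])
    then show ?thesis by algebra
  qed
  have hL: "b*c*d*L (Suc i) = V (Suc i) * g (Suc i) - be i * V i" if "i < k" for i
  proof -
    have bp: "pochhammer b (Suc i) = b * pochhammer (b+1) i" by (rule pochhammer_rec)
    have cp: "pochhammer c (Suc i) = c * pochhammer (c+1) i" by (rule pochhammer_rec)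
    have dp: "pochhammer d (Suc i) = d * pochhammer (d+1) i" by (rule pochhammer_rec)
    have b0: "b \<noteq> 0" "pochhammer (b+1) i \<noteq> 0" using nzb[of "Suc i"] that unfolding bp by auto
    have c0: "c \<noteq> 0" "pochhammer (c+1) i \<noteq> 0" using nzc[of "Suc i"] that unfolding cp by auto
    have d0: "d \<noteq> 0" "pochhammer (d+1) i \<noteq> 0" using nzd[of "Suc i"] that unfolding dp by auto
    have nz1: "(b + 1 + of_nat i \<noteq> 0 \<and> c + 1 + of_nat i \<noteq> 0 \<and> d + 1 + of_nat i \<noteq> 0) \<or> 1 - of_nat k + of_nat i = (0::complex)"
    proof (cases "Suc i \<le> m")
      case True
      then have "Suc (Suc i) \<le> k" using km by simp
      then have "pochhammer b (Suc (Suc i)) \<noteq> 0" "pochhammer c (Suc (Suc i)) \<noteq> 0" "pochhammer d (Suc (Suc i)) \<noteq> 0"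
        using nzb nzc nzd by auto
      then show ?thesis unfolding pochhammer_rec[of b] pochhammer_rec[of c] pochhammer_rec[of d]
          pochhammer_Suc[of "b+1"] pochhammer_Suc[of "c+1"] pochhammer_Suc[of "d+1"] by auto
    next
      case False
      then have "i = m" using that km by simp
      then show ?thesis using km by simp
    qed
    have f1: "fact (Suc i) = (of_nat i + 1) * (fact i :: complex)" by (simp add: fact_Suc)
    have f2: "pochhammer (- of_nat k) (Suc i) = - of_nat k * pochhammer (1 - of_nat k :: complex) i"
    proof -
      have eq: "- of_nat k + 1 = (1 - of_nat k::complex)" by simp
      show ?thesis by (subst pochhammer_rec) (simp only: eq)
    qed
    have f3: "pochhammer e (Suc i) = e * pochhammer (e+1) i" by (rule pochhammer_rec)
    have f4: "pochhammer (1 - of_nat k :: complex) (Suc i) = pochhammer (1 - of_nat k) i * (1 - of_nat k + of_nat i)"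
      by (rule pochhammer_Suc)
    have f5: "pochhammer (e+1) (Suc i) = pochhammer (e+1) i * (e + 1 + of_nat i)" by (rule pochhammer_Suc)
    have f6: "pochhammer (b+1) (Suc i) = pochhammer (b+1) i * (b + 1 + of_nat i)" by (rule pochhammer_Suc)
    have f7: "pochhammer (c+1) (Suc i) = pochhammer (c+1) i * (c + 1 + of_nat i)" by (rule pochhammer_Suc)
    have f8: "pochhammer (d+1) (Suc i) = pochhammer (d+1) i * (d + 1 + of_nat i)" by (rule pochhammer_Suc)
    have f9: "(of_nat (Suc i) :: complex) = of_nat i + 1" by simp
    have i1: "(of_nat i + 1 :: complex) \<noteq> 0" unfolding f9[symmetric] by (simp only: of_nat_eq_0_iff)
    show ?thesis unfolding L_def V_def g_def be_def f1 f2 f3 f4 f5 f6 f7 f8 f9 bp cp dp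
      by (rule coef) (use b0 c0 d0 nz1 i1 in \<open>auto simp: e_def\<close>)
  qed
  have V0: "V (Suc m) = 0"
  proof -
    have "(1 - of_nat k :: complex) = - of_nat m" using km by simp
    then have "pochhammer (1 - of_nat k :: complex) (Suc m) = 0" using pochhammer_of_nat_eq_0_lemma[of m "Suc m"] by simp
    then show ?thesis unfolding V_def by simp
  qed
  have b0: "b \<noteq> 0" "c \<noteq> 0" "d \<noteq> 0" using nzb[of 1] nzc[of 1] nzd[of 1] assms(1) by auto
  define S where "S = (\<Sum>j\<le>m. V j * (g j * P j - be j * P (Suc j)))"
  have sumL: "b*c*d * (\<Sum>j\<le>Suc m. P j * L j) = S"
  proof -
    have "b*c*d * (\<Sum>j\<le>Suc m. P j * L j) = (\<Sum>j\<le>Suc m. P j * (b*c*d*L j))"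
      unfolding sum_distrib_left by (rule sum.cong) (simp_all add: ac_simps)
    also have "\<dots> = P 0 * (b*c*d*L 0) + (\<Sum>i\<le>m. P (Suc i) * (b*c*d*L (Suc i)))"
      by (rule sum.atMost_Suc_shift)
    also have "\<dots> = b*c*d + (\<Sum>i\<le>m. P (Suc i) * (V (Suc i) * g (Suc i) - be i * V i))"
      using hL km by (simp add: P_def L_def)
    finally have A: "b*c*d * (\<Sum>j\<le>Suc m. P j * L j) = b*c*d + (\<Sum>i\<le>m. P (Suc i) * (V (Suc i) * g (Suc i) - be i * V i))" .
    have "(\<Sum>j\<le>m. V j * g j * P j) = (\<Sum>j\<le>Suc m. V j * g j * P j)" using V0 by simp
    also have "\<dots> = V 0 * g 0 * P 0 + (\<Sum>i\<le>m. V (Suc i) * g (Suc i) * P (Suc i))"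
      by (rule sum.atMost_Suc_shift)
    also have "\<dots> = b*c*d + (\<Sum>i\<le>m. V (Suc i) * g (Suc i) * P (Suc i))"
      by (simp add: V_def g_def P_def)
    finally have B: "(\<Sum>j\<le>m. V j * g j * P j) = b*c*d + (\<Sum>i\<le>m. V (Suc i) * g (Suc i) * P (Suc i))" .
    have "S = (\<Sum>j\<le>m. V j * g j * P j) - (\<Sum>j\<le>m. be j * V j * P (Suc j))"
      unfolding S_def by (simp add: sum_subtractf[symmetric] algebra_simps)
    also have "\<dots> = b*c*d + ((\<Sum>i\<le>m. V (Suc i) * g (Suc i) * P (Suc i)) - (\<Sum>j\<le>m. be j * V j * P (Suc j)))"
      unfolding B by simp
    also have "\<dots> = b*c*d + (\<Sum>i\<le>m. P (Suc i) * (V (Suc i) * g (Suc i) - be i * V i))"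
      by (simp add: sum_subtractf[symmetric] algebra_simps)
    finally show ?thesis using A by simp
  qed
  have lhs: "a * b * c * d * ((n + a / 2) / (a / 2)) = b*c*d*(2*n+a)"
    using assms(2) by (simp add: field_simps)
  have rhs: "(n + a) * (n + b) * (n + c) * (n + d) * Q2 (k - 1) n (a + 1) (b + 1) (c + 1) (d + 1)
         - n * (n + a - b) * (n + a - c) * (n + a - d) * Q2 (k - 1) (n - 1) (a + 1) (b + 1) (c + 1) (d + 1)
     = (2*n+a) * S"
    unfolding hQ1 hQ2 S_def
    by (simp add: sum_distrib_left sum_subtractf[symmetric] hC)
  show ?thesis unfolding lhs rhs hQ sumL[symmetric] by (simp add: ac_simps)
qed

end
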